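(* Let $x_0\in(0,1)$ and let $p\in C([0,1])$ with $p>0$ on $[0,1]\setminus\{x_0\}$, $p(x_0)=0$, and suppose there exists $q>1$ such that $x\mapsto p(x)/|x-x_0|^q$ is non increasing on the left of $x_0$ and non decreasing on the right of $x_0$. Then there exists a constant $C_{HP}>0$ such that for every function $w$, locally absolutely continuous on $[0,x_0)\cup(x_0,1]$, satisfying $w'(0)=w'(1)=0$ and $\int_0^1|w'(x)|^2dx<+\infty$, one has \[ \int_0^1\frac{p(x)}{(x-x_0)^2}w^2(x)\,dx\le C_{HP}\int_0^1p(x)|w'(x)|^2dx+2\Xi\Big[w^2(1)\frac{p(1)}{(1-x_0)^q}+w^2(0)\frac{p(0)}{x_0^q}\Big], \] where $\Xi:=\max\Big\{\frac{(1-x_0)^{q-1}}{q-1},\frac{1}{q-1}\Big\}$. *)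

theory Defs
  imports "HOL-Analysis.Analysis"
begin

text \<open>Absolute continuity of a real function on the compact interval [a,b]
  (classical epsilon-delta definition with finitely many non-overlapping subintervals).\<close>
definition abs_continuous_on :: "(real \<Rightarrow> real) \<Rightarrow> real \<Rightarrow> real \<Rightarrow> bool" where
  "abs_continuous_on f a b \<longleftrightarrow>
     (\<forall>e>0. \<exists>d>0. \<forall>(n::nat) (l::nat \<Rightarrow> real) (r::nat \<Rightarrow> real).
        (\<forall>i<n. a \<le> l i \<and> l i \<le> r i \<and> r i \<le> b) \<and>
        (\<forall>i<n. \<forall>j<n. i \<noteq> j \<longrightarrow> r i \<le> l j \<or> r j \<le> l i) \<and>
        (\<Sum>i<n. r i - l i) < d
        \<longrightarrow> (\<Sum>i<n. \<bar>f (r i) - f (l i)\<bar>) < e)"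

text \<open>Local absolute continuity on [0,x0) \<union> (x0,1]: absolute continuity on every
  compact subinterval of [0,x0) and of (x0,1].\<close>
definition loc_abs_continuous_punctured :: "(real \<Rightarrow> real) \<Rightarrow> real \<Rightarrow> bool" where
  "loc_abs_continuous_punctured f x0 \<longleftrightarrow>
     (\<forall>a b. (0 \<le> a \<and> b < x0) \<or> (x0 < a \<and> b \<le> 1) \<longrightarrow> abs_continuous_on f a b)"

end

theory Submission
  imports Defs
begin

lemma acD:
  assumes "abs_continuous_on f a b" "e > 0"
  obtains d where "d > 0" "\<And>(n::nat) (l::nat\<Rightarrow>real) r. (\<forall>i<n. a \<le> l i \<and> l i \<le> r i \<and> r i \<le> b) \<Longrightarrow>
        (\<forall>i<n. \<forall>j<n. i \<noteq> j \<longrightarrow> r i \<le> l j \<or> r j \<le> l i) \<Longrightarrow>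
        (\<Sum>i<n. r i - l i) < d
        \<Longrightarrow> (\<Sum>i<n. \<bar>f (r i) - f (l i)\<bar>) < e"
proof -
  from assms obtain d where "d > 0" and H: "\<forall>(n::nat) (l::nat\<Rightarrow>real) r. (\<forall>i<n. a \<le> l i \<and> l i \<le> r i \<and> r i \<le> b) \<and>
        (\<forall>i<n. \<forall>j<n. i \<noteq> j \<longrightarrow> r i \<le> l j \<or> r j \<le> l i) \<and>
        (\<Sum>i<n. r i - l i) < d
        \<longrightarrow> (\<Sum>i<n. \<bar>f (r i) - f (l i)\<bar>) < e"
    unfolding abs_continuous_on_def by auto
  show ?thesis
    by (rule that[OF \<open>d > 0\<close>]) (use H in blast)
qed

lemma ac_imp_cont:
  assumes ac: "abs_continuous_on f a b"
  shows "continuous_on {a..b} f"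
  unfolding continuous_on_iff
proof (intro ballI allI impI)
  fix x e :: real assume x: "x \<in> {a..b}" and e: "0 < e"
  obtain d where d: "d > 0" and H: "\<And>(n::nat) (l::nat\<Rightarrow>real) r. (\<forall>i<n. a \<le> l i \<and> l i \<le> r i \<and> r i \<le> b) \<Longrightarrow>
        (\<forall>i<n. \<forall>j<n. i \<noteq> j \<longrightarrow> r i \<le> l j \<or> r j \<le> l i) \<Longrightarrow>
        (\<Sum>i<n. r i - l i) < d \<Longrightarrow> (\<Sum>i<n. \<bar>f (r i) - f (l i)\<bar>) < e"
    by (rule acD[OF ac e]) blast
  show "\<exists>d>0. \<forall>x'\<in>{a..b}. dist x' x < d \<longrightarrow> dist (f x') (f x) < e"
  proof (intro exI[of _ d] conjI ballI impI d)
    fix y assume y: "y \<in> {a..b}" and dy: "dist y x < d"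
    have "(\<Sum>i<(1::nat). \<bar>f (max x y) - f (min x y)\<bar>) < e"
      using H[of 1 "\<lambda>_. min x y" "\<lambda>_. max x y"] x y dy by (auto simp: dist_real_def)
    then show "dist (f y) (f x) < e"
      by (cases "x \<le> y") (auto simp: dist_real_def max_def min_def abs_minus_commute)
  qed
qed

lemma components_order:
  fixes C D :: "real set"
  assumes "C \<in> components U" "D \<in> components U" "C \<noteq> D"
  shows "(\<forall>x\<in>closure C. \<forall>y\<in>closure D. x \<le> y) \<or> (\<forall>x\<in>closure D. \<forall>y\<in>closure C. x \<le> y)"
proof -
  have dis: "C \<inter> D = {}"
    using assms pairwise_disjoint_components unfolding pairwise_def by blast
  have iC: "is_interval C" and iD: "is_interval D"
    using assms in_components_connected is_interval_connected_1 by blast+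
  obtain c d where c: "c \<in> C" and d: "d \<in> D"
    using assms in_components_nonempty by blast
  have key: "\<forall>x\<in>C. \<forall>y\<in>D. x < y" if "c < d" "c \<in> C" "d \<in> D" "C \<inter> D = {}"
       "is_interval C" "is_interval D" for C D :: "real set" and c d
  proof (intro ballI, rule ccontr)
    fix x y assume x: "x \<in> C" and y: "y \<in> D" and n: "\<not> x < y"
    show False
    proof (cases "y < c")
      case True
      then have "c \<in> D" using that(3,6) y \<open>c < d\<close> unfolding is_interval_1
        by (meson less_imp_le)
      then show False using that by blast
    next
      case False
      then have "y \<in> C" using that(2,5) x n unfolding is_interval_1 by (meson not_le)
      then show False using y that by blast
    qed
  qed
  have clo: "\<forall>x\<in>closure C. \<forall>y\<in>closure D. x \<le> y" if "\<forall>x\<in>C. \<forall>y\<in>D. x < y" for C D :: "real set"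
  proof -
    have "\<forall>y\<in>D. closure C \<subseteq> {..y}"
      using that by (intro ballI closure_minimal) (auto intro: less_imp_le)
    then have "\<forall>x\<in>closure C. D \<subseteq> {x..}" by auto
    then have "\<forall>x\<in>closure C. closure D \<subseteq> {x..}"
      by (intro ballI closure_minimal) auto
    then show ?thesis by auto
  qed
  have "c \<noteq> d" using c d dis by blast
  then show ?thesis
  proof (cases "c < d")
    case True
    then show ?thesis using key[OF True c d dis iC iD] clo by blast
  next
    case False
    then have dc: "d < c" using \<open>c \<noteq> d\<close> by simp
    have "D \<inter> C = {}" using dis by blast
    then show ?thesis using key[OF dc d c _ iD iC] clo by blast
  qed
qed

lemma measure_Icc_real: "a \<le> b \<Longrightarrow> measure lebesgue {a..b::real} = b - a"
  by (simp add: lmeasure_integral)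

lemma measure_Ioo_real: "a \<le> b \<Longrightarrow> measure lebesgue {a<..<b::real} = b - a"
proof -
  assume ab: "a \<le> b"
  have "negligible (sym_diff {a..b} {a<..<b})"
    by (rule negligible_subset[of "{a,b}"]) auto
  then have "measure lebesgue {a<..<b} = measure lebesgue {a..b}"
    by (intro measure_negligible_symdiff) auto
  then show ?thesis using ab measure_Icc_real by simp
qed

lemma ac_lusin:
  fixes f :: "real \<Rightarrow> real"
  assumes ac: "abs_continuous_on f a b" and N: "negligible N" and Nab: "N \<subseteq> {a..b}"
  shows "negligible (f ` N)"
proof -
  have cont: "continuous_on {a..b} f" by (rule ac_imp_cont[OF ac])
  define N' where "N' = N \<inter> {a<..<b}"
  have sub: "f ` N \<subseteq> f ` N' \<union> {f a, f b}"
  proof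
    fix y assume "y \<in> f ` N"
    then obtain x where x: "x \<in> N" "y = f x" by blast
    then have "x \<in> {a..b}" using Nab by blast
    then have "x = a \<or> x = b \<or> x \<in> {a<..<b}" by auto
    then show "y \<in> f ` N' \<union> {f a, f b}" using x unfolding N'_def by blast
  qed
  have "negligible (f ` N')"
    unfolding negligible_outer_le
  proof (intro allI impI)
    fix e :: real assume e: "e > 0"
    obtain d where d: "d > 0" and H: "\<And>(n::nat) (l::nat\<Rightarrow>real) r. (\<forall>i<n. a \<le> l i \<and> l i \<le> r i \<and> r i \<le> b) \<Longrightarrow>
        (\<forall>i<n. \<forall>j<n. i \<noteq> j \<longrightarrow> r i \<le> l j \<or> r j \<le> l i) \<Longrightarrow>
        (\<Sum>i<n. r i - l i) < d \<Longrightarrow> (\<Sum>i<n. \<bar>f (r i) - f (l i)\<bar>) < e"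
      by (rule acD[OF ac e]) blast
    have negN': "negligible N'" using N by (simp add: N'_def negligible_Int)
    then have N'L: "N' \<in> sets lebesgue" by (simp add: negligible_imp_sets)
    obtain T where T: "open T" "N' \<subseteq> T" "T - N' \<in> lmeasurable" "emeasure lebesgue (T - N') < ennreal d"
      using sets_lebesgue_outer_open[OF N'L d] by blast
    define U where "U = T \<inter> {a<..<b}"
    have Uo: "open U" by (simp add: U_def T open_Int)
    have Ub: "bounded U" unfolding U_def by (rule bounded_subset[OF bounded_Ioo]) auto
    have UL: "U \<in> lmeasurable" using lmeasurable_open Ub Uo by blast
    have Umeas: "measure lebesgue U < d"
    proof -
      have m1: "measure lebesgue (T - N') < d"
        using T(3,4) by (simp add: emeasure_eq_measure2 ennreal_less_iff)
      have "U \<subseteq> (T - N') \<union> N'" by (auto simp: U_def)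
      moreover have "(T - N') \<union> N' \<in> lmeasurable"
        using T(3) negN' negligible_imp_measurable by blast
      ultimately have "measure lebesgue U \<le> measure lebesgue ((T - N') \<union> N')"
        using UL by (intro measure_mono_fmeasurable) auto
      also have "\<dots> \<le> measure lebesgue (T - N') + measure lebesgue N'"
        using T(3) negN' by (intro measure_Un_le) (auto simp: negligible_imp_sets)
      also have "\<dots> = measure lebesgue (T - N')"
        using negN' by (simp add: negligible_imp_measure0)
      finally show ?thesis using m1 by linarith
    qed
    define \<C> where "\<C> = components U"
    have cc: "countable \<C>"
      unfolding \<C>_def
    proof (rule countable_disjoint_open_subsets)
      show "\<And>S. S \<in> components U \<Longrightarrow> open S" using Uo open_components by blast
      show "disjoint (components U)"
        using pairwise_disjoint_components[of U] by (simp add: pairwise_def disjnt_def)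
    qed
    have CU: "C \<subseteq> U" if "C \<in> \<C>" for C
      using that in_components_subset \<C>_def by blast
    have CabO: "C \<subseteq> {a<..<b}" if "C \<in> \<C>" for C
      using CU[OF that] by (auto simp: U_def)
    have clC: "closure C \<subseteq> {a..b}" if "C \<in> \<C>" for C
      using CabO[OF that] by (intro closure_minimal) auto
    have Cbd: "bounded C" if "C \<in> \<C>" for C
      using CU[OF that] Ub bounded_subset by blast
    have Cne: "C \<noteq> {}" if "C \<in> \<C>" for C
      using that in_components_nonempty \<C>_def by blast
    have CL: "C \<in> lmeasurable" if "C \<in> \<C>" for C
      using that Cbd[OF that] open_components[OF Uo] lmeasurable_open \<C>_def by blast
    have ex: "\<exists>l r. l \<in> closure C \<and> r \<in> closure C \<and> l \<le> r \<and>
                measure lebesgue (f ` closure C) \<le> \<bar>f r - f l\<bar>" if C: "C \<in> \<C>" for C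
    proof -
      have cpt: "compact (closure C)" using Cbd[OF C] by (simp add: compact_closure)
      have ne: "closure C \<noteq> {}" using Cne[OF C] by simp
      have cf: "continuous_on (closure C) f" using cont clC[OF C] continuous_on_subset by blast
      obtain s where s: "s \<in> closure C" "\<forall>y\<in>closure C. f y \<le> f s"
        using continuous_attains_sup[OF cpt ne cf] by blast
      obtain t where t: "t \<in> closure C" "\<forall>y\<in>closure C. f t \<le> f y"
        using continuous_attains_inf[OF cpt ne cf] by blast
      have K: "f ` closure C \<subseteq> {f t..f s}" using s t by auto
      have "f t \<le> f s" using s t by blast
      have Kc: "compact (f ` closure C)" by (rule compact_continuous_image[OF cf cpt])
      have "measure lebesgue (f ` closure C) \<le> measure lebesgue {f t..f s}"
        using K Kc by (intro measure_mono_fmeasurable) (auto simp: lmeasurable_compact fmeasurableD)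
      also have "\<dots> = f s - f t" using \<open>f t \<le> f s\<close> by (rule measure_Icc_real)
      finally have "measure lebesgue (f ` closure C) \<le> \<bar>f (max s t) - f (min s t)\<bar>"
        by (cases "s \<le> t") (auto simp: max_def min_def)
      then show ?thesis using s t by (intro exI[of _ "min s t"] exI[of _ "max s t"]) (auto simp: min_def max_def)
    qed
    have "\<forall>C\<in>\<C>. \<exists>lr. fst lr \<in> closure C \<and> snd lr \<in> closure C \<and> fst lr \<le> snd lr \<and>
                measure lebesgue (f ` closure C) \<le> \<bar>f (snd lr) - f (fst lr)\<bar>"
    proof
      fix C assume "C \<in> \<C>"
      from ex[OF this] obtain l r where lr: "l \<in> closure C" "r \<in> closure C" "l \<le> r"
          "measure lebesgue (f ` closure C) \<le> \<bar>f r - f l\<bar>" by blast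
      show "\<exists>lr. fst lr \<in> closure C \<and> snd lr \<in> closure C \<and> fst lr \<le> snd lr \<and>
                measure lebesgue (f ` closure C) \<le> \<bar>f (snd lr) - f (fst lr)\<bar>"
        by (rule exI[of _ "(l, r)"]) (use lr in simp)
    qed
    from bchoice[OF this] obtain LRf where LRf: "\<forall>C\<in>\<C>. fst (LRf C) \<in> closure C \<and> snd (LRf C) \<in> closure C \<and> fst (LRf C) \<le> snd (LRf C) \<and>
                measure lebesgue (f ` closure C) \<le> \<bar>f (snd (LRf C)) - f (fst (LRf C))\<bar>"
      by (elim exE)
    define L where "L C = fst (LRf C)" for C
    define R where "R C = snd (LRf C)" for C
    have LR: "\<And>C. C \<in> \<C> \<Longrightarrow> L C \<in> closure C \<and> R C \<in> closure C \<and> L C \<le> R C \<and>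
                measure lebesgue (f ` closure C) \<le> \<bar>f (R C) - f (L C)\<bar>"
      using LRf unfolding L_def R_def by blast
    have lenC: "R C - L C \<le> measure lebesgue C" if C: "C \<in> \<C>" for C
    proof -
      have iC: "is_interval C"
        using C in_components_connected is_interval_connected_1 \<C>_def by blast
      have "{L C<..<R C} \<subseteq> C"
      proof
        fix z assume z: "z \<in> {L C<..<R C}"
        have Lc: "L C \<in> closure C" and Rc: "R C \<in> closure C" using LR[OF C] by auto
        have z1: "z - L C > 0" and z2: "R C - z > 0" using z by auto
        obtain c1 where c1: "c1 \<in> C" "dist c1 (L C) < z - L C"
          using Lc[unfolded closure_approachable, rule_format, OF z1] by blast
        obtain c2 where c2: "c2 \<in> C" "dist c2 (R C) < R C - z"
          using Rc[unfolded closure_approachable, rule_format, OF z2] by blast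
        have "c1 \<le> z" "z \<le> c2" using c1 c2 by (auto simp: dist_real_def)
        then show "z \<in> C" using iC c1 c2 unfolding is_interval_1 by blast
      qed
      then have "measure lebesgue {L C<..<R C} \<le> measure lebesgue C"
        using CL[OF C] by (intro measure_mono_fmeasurable) auto
      then show ?thesis using LR[OF C] measure_Ioo_real by simp
    qed
    define A where "A C = f ` closure C" for C
    have AL: "A C \<in> fmeasurable lebesgue" if "C \<in> \<C>" for C
    proof -
      have "compact (closure C)" using Cbd[OF that] by (simp add: compact_closure)
      moreover have "continuous_on (closure C) f" using cont clC[OF that] continuous_on_subset by blast
      ultimately show ?thesis unfolding A_def by (intro lmeasurable_compact compact_continuous_image)
    qed
    have bound: "measure lebesgue (\<Union>C\<in>I'. A C) \<le> e" if I': "I' \<subseteq> \<C>" "finite I'" for I'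
    proof -
      obtain h where h: "bij_betw h {0..<card I'} I'" using ex_bij_betw_nat_finite[OF I'(2)] by blast
      define n where "n = card I'"
      have hI: "h i \<in> I'" if "i < n" for i using h that unfolding n_def bij_betw_def by auto
      have hinj: "h i \<noteq> h j" if "i < n" "j < n" "i \<noteq> j" for i j
        using h that unfolding n_def bij_betw_def inj_on_def by auto
      have sumeq: "(\<Sum>i<n. g (h i)) = (\<Sum>C\<in>I'. g C)" for g :: "real set \<Rightarrow> real"
        using sum.reindex_bij_betw[OF h, of g] by (simp add: n_def lessThan_atLeast0)
      have "measure lebesgue (\<Union>C\<in>I'. A C) \<le> (\<Sum>C\<in>I'. measure lebesgue (A C))"
        using I' AL by (intro measure_UNION_le) (auto simp: fmeasurableD)
      also have "\<dots> \<le> (\<Sum>C\<in>I'. \<bar>f (R C) - f (L C)\<bar>)"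
        using I' LR unfolding A_def by (intro sum_mono) auto
      also have "\<dots> = (\<Sum>i<n. \<bar>f ((R \<circ> h) i) - f ((L \<circ> h) i)\<bar>)"
        using sumeq[of "\<lambda>C. \<bar>f (R C) - f (L C)\<bar>"] by simp
      also have "\<dots> < e"
      proof (rule H)
        show "\<forall>i<n. a \<le> (L \<circ> h) i \<and> (L \<circ> h) i \<le> (R \<circ> h) i \<and> (R \<circ> h) i \<le> b"
        proof (intro allI impI)
          fix i assume "i < n"
          then have C: "h i \<in> \<C>" using hI I' by blast
          then show "a \<le> (L \<circ> h) i \<and> (L \<circ> h) i \<le> (R \<circ> h) i \<and> (R \<circ> h) i \<le> b"
            using LR[OF C] clC[OF C] by auto
        qed
        show "\<forall>i<n. \<forall>j<n. i \<noteq> j \<longrightarrow> (R \<circ> h) i \<le> (L \<circ> h) j \<or> (R \<circ> h) j \<le> (L \<circ> h) i"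
        proof (intro allI impI)
          fix i j assume ij: "i < n" "j < n" "i \<noteq> j"
          have C: "h i \<in> \<C>" "h j \<in> \<C>" using hI I' ij by blast+
          have "h i \<noteq> h j" using hinj ij by blast
          from components_order[OF C[unfolded \<C>_def] this]
          show "(R \<circ> h) i \<le> (L \<circ> h) j \<or> (R \<circ> h) j \<le> (L \<circ> h) i"
            using LR[OF C(1)] LR[OF C(2)] by auto
        qed
        have "(\<Sum>i<n. (R \<circ> h) i - (L \<circ> h) i) = (\<Sum>C\<in>I'. R C - L C)"
          using sumeq[of "\<lambda>C. R C - L C"] by simp
        also have "\<dots> \<le> (\<Sum>C\<in>I'. measure lebesgue C)"
          using I' lenC by (intro sum_mono) auto
        also have "\<dots> = measure lebesgue (\<Union>I')"
        proof (rule measure_Union'[symmetric])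
          show "finite I'" by fact
          show "\<And>S. S \<in> I' \<Longrightarrow> S \<in> lmeasurable" using I' CL by blast
          show "pairwise disjnt I'"
            using pairwise_subset[OF pairwise_disjoint_components[of U]] I'
            unfolding \<C>_def disjnt_def by blast
        qed
        also have "\<dots> \<le> measure lebesgue U"
        proof (rule measure_mono_fmeasurable)
          show "\<Union>I' \<subseteq> U" using I' CU by blast
          show "\<Union>I' \<in> sets lebesgue" using I' CL by (intro sets.finite_Union) (auto simp: fmeasurableD)
          show "U \<in> lmeasurable" by fact
        qed
        also have "\<dots> < d" by fact
        finally show "(\<Sum>i<n. (R \<circ> h) i - (L \<circ> h) i) < d" .
      qed
      finally show ?thesis by linarith
    qed
    show "\<exists>T. f ` N' \<subseteq> T \<and> T \<in> lmeasurable \<and> measure lebesgue T \<le> e"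
    proof (intro exI conjI)
      show "f ` N' \<subseteq> (\<Union>C\<in>\<C>. A C)"
      proof
        fix y assume "y \<in> f ` N'"
        then obtain x where x: "x \<in> N'" "y = f x" by blast
        then have "x \<in> U" using T(2) by (auto simp: U_def N'_def)
        then obtain C where "C \<in> \<C>" "x \<in> C" using Union_components[of U] \<C>_def by blast
        then show "y \<in> (\<Union>C\<in>\<C>. A C)" using x closure_subset unfolding A_def by blast
      qed
      show "(\<Union>C\<in>\<C>. A C) \<in> lmeasurable"
        by (rule fmeasurable_UN_bound[OF cc AL bound]) auto
      show "measure lebesgue (\<Union>C\<in>\<C>. A C) \<le> e"
        by (rule measure_UN_bound[OF cc AL bound]) auto
    qed
  qed
  then show ?thesis
    by (rule negligible_subset[OF _ sub, unfolded negligible_Un_eq, OF conjI]) auto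
qed

lemma lmeasurable_vec_image:
  fixes A :: "real set"
  assumes "(vec ` A :: (real^1) set) \<in> lmeasurable"
  shows "A \<in> lmeasurable \<and> measure lebesgue A = measure lebesgue (vec ` A :: (real^1) set)"
proof -
  have i: "(\<lambda>x::real^1. 1::real) integrable_on vec ` A"
    using lmeasurable_iff_integrable_on[THEN iffD1, OF assms] .
  have e: "measure lebesgue (vec ` A :: (real^1) set) = integral (vec ` A) (\<lambda>x::real^1. 1::real)"
    by (rule lmeasure_integral[OF assms])
  have "((\<lambda>x::real^1. 1::real) has_integral measure lebesgue (vec ` A :: (real^1) set)) (vec ` A)"
    unfolding e using i by (rule integrable_integral)
  from has_integral_vec1_I[OF this]
  have "((\<lambda>x::real. 1::real) has_integral measure lebesgue (vec ` A :: (real^1) set)) A"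
    by (simp add: o_def image_image)
  then have A: "A \<in> lmeasurable"
    using lmeasurable_iff_integrable_on[THEN iffD2, OF has_integral_integrable] by blast
  have "measure lebesgue A = integral A (\<lambda>x. 1)" by (rule lmeasure_integral[OF A])
  also have "\<dots> = measure lebesgue (vec ` A :: (real^1) set)"
    using \<open>((\<lambda>x::real. 1::real) has_integral _) A\<close> by (rule integral_unique)
  finally show ?thesis using A by simp
qed

lemma measure_image_real:
  fixes g g' :: "real \<Rightarrow> real"
  assumes S: "S \<in> sets lebesgue"
    and der: "\<And>x. x \<in> S \<Longrightarrow> (g has_real_derivative g' x) (at x within S)"
    and int: "(\<lambda>x. \<bar>g' x\<bar>) integrable_on S"
  shows "g ` S \<in> lmeasurable \<and> measure lebesgue (g ` S) \<le> integral S (\<lambda>x. \<bar>g' x\<bar>)"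
proof -
  let ?lift = "vec :: real \<Rightarrow> real^1"
  let ?drop = "(\<lambda>x::real^1. x $ 1)"
  have S': "?lift ` S \<in> sets lebesgue"
    by (auto intro: differentiable_image_in_sets_lebesgue [OF S] differentiable_vec)
  have "((\<lambda>x. vec (g (x $ 1))) has_derivative (*\<^sub>R) (g' z)) (at (vec z) within ?lift ` S)"
    if "z \<in> S" for z
    using der [OF that]
    by (simp add: has_real_derivative_iff_has_vector_derivative has_vector_derivative_def has_derivative_vector_1)
  then have der': "\<And>x. x \<in> ?lift ` S \<Longrightarrow>
        (?lift \<circ> g \<circ> ?drop has_derivative (*\<^sub>R) (g' (?drop x))) (at x within ?lift ` S)"
    by (auto simp: o_def)
  have "((\<lambda>x::real^1. \<bar>g' (x$1)\<bar>) \<circ> vec has_integral integral S (\<lambda>x. \<bar>g' x\<bar>)) ((\<lambda>x. x $ 1) ` ?lift ` S)"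
    using int by (simp add: o_def image_image integrable_integral)
  from has_integral_vec1_D[OF this]
  have int': "((\<lambda>x::real^1. \<bar>g' (x$1)\<bar>) has_integral integral S (\<lambda>x. \<bar>g' x\<bar>)) (?lift ` S)" .
  have int'': "(\<lambda>x. \<bar>det (matrix ((*\<^sub>R) (g' (?drop x)) :: real^1 \<Rightarrow> real^1))\<bar>) integrable_on ?lift ` S"
    using int' by (simp add: det_matrix_scaleR integrable_on_def) blast
  have m: "?lift ` g ` S \<in> lmeasurable"
    using measurable_differentiable_image[OF S' der' int''] by (simp add: image_image o_def)
  have "measure lebesgue (?lift ` g ` S) \<le> integral (?lift ` S) (\<lambda>x. \<bar>det (matrix ((*\<^sub>R) (g' (?drop x)) :: real^1 \<Rightarrow> real^1))\<bar>)"
    using measure_differentiable_image[OF S' der' int''] by (simp add: image_image o_def)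
  also have "\<dots> = integral S (\<lambda>x. \<bar>g' x\<bar>)"
    using int' by (simp add: det_matrix_scaleR integral_unique)
  finally show ?thesis using lmeasurable_vec_image[OF m] by simp
qed

lemma ftc_ineq:
  fixes f f' :: "real \<Rightarrow> real"
  assumes ac: "abs_continuous_on f a b" and ab: "a \<le> b"
    and N: "negligible N"
    and der: "\<And>x. x \<in> {a..b} - N \<Longrightarrow> (f has_real_derivative f' x) (at x)"
    and meas: "set_borel_measurable borel {a..b} f'"
  shows "ennreal \<bar>f b - f a\<bar> \<le> (\<integral>\<^sup>+x. ennreal \<bar>f' x\<bar> * indicator {a..b} x \<partial>lborel)"
proof (cases "(\<integral>\<^sup>+x. ennreal \<bar>f' x\<bar> * indicator {a..b} x \<partial>lborel) = \<infinity>")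
  case True
  then show ?thesis by simp
next
  case False
  define g where "g x = indicator {a..b} x * \<bar>f' x\<bar>" for x
  have gm: "g \<in> borel_measurable borel"
  proof -
    have "(\<lambda>x. \<bar>indicator {a..b} x *\<^sub>R f' x\<bar>) \<in> borel_measurable borel"
      using borel_measurable_abs[OF meas[unfolded set_borel_measurable_def]] .
    moreover have "(\<lambda>x. \<bar>indicator {a..b} x *\<^sub>R f' x\<bar>) = g"
      by (auto simp: g_def indicator_def fun_eq_iff)
    ultimately show ?thesis by simp
  qed
  have geq: "(\<integral>\<^sup>+x. ennreal \<bar>f' x\<bar> * indicator {a..b} x \<partial>lborel) = (\<integral>\<^sup>+x. g x \<partial>lborel)"
    by (intro nn_integral_cong) (auto simp: g_def indicator_def)
  have gfin: "(\<integral>\<^sup>+x. g x \<partial>lborel) < \<infinity>" using False geq by (simp add: top.not_eq_extremum)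
  have gint: "g integrable_on UNIV"
    by (rule nn_integral_integrable_on[OF gm _ gfin]) (simp add: g_def)
  have gI: "(\<integral>\<^sup>+x. g x \<partial>lborel) = integral UNIV g"
    by (rule nn_integral_lborel_eq_integral[OF gm _ gfin]) (simp add: g_def)
  have gif: "g = (\<lambda>x. if x \<in> {a..b} then \<bar>f' x\<bar> else 0)"
    by (auto simp: g_def indicator_def fun_eq_iff)
  have intab: "(\<lambda>x. \<bar>f' x\<bar>) integrable_on {a..b}"
    using gint unfolding gif integrable_restrict_UNIV .
  have gUNIV: "integral UNIV g = integral {a..b} (\<lambda>x. \<bar>f' x\<bar>)"
    unfolding gif integral_restrict_UNIV ..
  define S where "S = {a..b} - N"
  have S: "S \<in> sets lebesgue"
    unfolding S_def using N by (intro sets.Diff) (auto simp: negligible_imp_sets)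
  have negS: "negligible {x \<in> S - {a..b}. \<bar>f' x\<bar> \<noteq> 0}" "negligible {x \<in> {a..b} - S. \<bar>f' x\<bar> \<noteq> 0}"
    by (auto simp: S_def intro: negligible_subset[OF N])
  have intS: "(\<lambda>x. \<bar>f' x\<bar>) integrable_on S"
    by (rule integrable_spike_set[OF intab]) (use negS in \<open>auto simp: S_def\<close>)
  have eqS: "integral S (\<lambda>x. \<bar>f' x\<bar>) = integral {a..b} (\<lambda>x. \<bar>f' x\<bar>)"
    by (rule integral_spike_set) (use negS in auto)
  have derS: "(f has_real_derivative f' x) (at x within S)" if "x \<in> S" for x
    using der[of x] that by (auto simp: S_def intro: has_field_derivative_at_within)
  from measure_image_real[OF S derS intS]
  have fS: "f ` S \<in> lmeasurable" "measure lebesgue (f ` S) \<le> integral S (\<lambda>x. \<bar>f' x\<bar>)" by auto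
  have negN: "negligible (f ` (N \<inter> {a..b}))"
  proof (rule ac_lusin[OF ac])
    show "negligible (N \<inter> {a..b})" using N by (simp add: negligible_Int)
  qed blast
  have cont: "continuous_on {a..b} f" by (rule ac_imp_cont[OF ac])
  have conn: "is_interval (f ` {a..b})"
    using connected_continuous_image[OF cont] is_interval_connected_1 connected_Icc by blast
  have seg: "{min (f a) (f b)..max (f a) (f b)} \<subseteq> f ` {a..b}"
  proof
    fix y assume y: "y \<in> {min (f a) (f b)..max (f a) (f b)}"
    have "f a \<in> f ` {a..b}" "f b \<in> f ` {a..b}" using ab by auto
    then have "min (f a) (f b) \<in> f ` {a..b}" "max (f a) (f b) \<in> f ` {a..b}"
      by (simp_all add: min_def max_def)
    moreover have "min (f a) (f b) \<le> y" "y \<le> max (f a) (f b)" using y by auto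
    ultimately show "y \<in> f ` {a..b}" using conn unfolding is_interval_1 by blast
  qed
  have sub: "{min (f a) (f b)..max (f a) (f b)} \<subseteq> f ` S \<union> f ` (N \<inter> {a..b})"
    using seg by (auto simp: S_def)
  have "\<bar>f b - f a\<bar> = measure lebesgue {min (f a) (f b)..max (f a) (f b)}"
    by (subst measure_Icc_real) auto
  also have "\<dots> \<le> measure lebesgue (f ` S \<union> f ` (N \<inter> {a..b}))"
    using sub fS negN by (intro measure_mono_fmeasurable) (auto simp: negligible_imp_measurable)
  also have "\<dots> \<le> measure lebesgue (f ` S) + measure lebesgue (f ` (N \<inter> {a..b}))"
    using fS negN by (intro measure_Un_le) (auto simp: negligible_imp_sets)
  also have "\<dots> = measure lebesgue (f ` S)"
    using negN by (simp add: negligible_imp_measure0)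
  also have "\<dots> \<le> integral {a..b} (\<lambda>x. \<bar>f' x\<bar>)" using fS eqS by simp
  finally have "\<bar>f b - f a\<bar> \<le> integral {a..b} (\<lambda>x. \<bar>f' x\<bar>)" .
  then have "ennreal \<bar>f b - f a\<bar> \<le> ennreal (integral {a..b} (\<lambda>x. \<bar>f' x\<bar>))"
    by (rule ennreal_leI)
  also have "\<dots> = (\<integral>\<^sup>+x. ennreal \<bar>f' x\<bar> * indicator {a..b} x \<partial>lborel)"
    using geq gI gUNIV by simp
  finally show ?thesis .
qed

lemma dpow_deriv:
  assumes "x < x0"
  shows "((\<lambda>t. (x0 - t) powr c) has_real_derivative (- c * (x0 - x) powr (c - 1))) (at x)"
proof -
  have "((\<lambda>t. x0 - t) has_real_derivative -1) (at x)"
    by (auto intro!: derivative_eq_intros)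
  from DERIV_fun_powr[OF this, of c] assms show ?thesis by simp
qed

lemma pow_int_to:
  fixes x0 t e :: real
  assumes e: "e > -1" and t: "t \<le> x0"
  shows "(\<integral>\<^sup>+x. ennreal ((x0 - x) powr e) * indicator {t..x0} x \<partial>lborel)
         = ennreal ((x0 - t) powr (e+1) / (e+1))"
proof -
  define F where "F x = - ((x0 - x) powr (e+1)) / (e+1)" for x
  have "((\<lambda>x. (x0 - x) powr e) has_integral (F x0 - F t)) {t..x0}"
  proof (rule fundamental_theorem_of_calculus_interior[OF t])
    show "continuous_on {t..x0} F"
      unfolding F_def using e
      by (intro continuous_intros continuous_on_powr') auto
    fix x assume x: "x \<in> {t<..<x0}"
    have "(F has_real_derivative (x0 - x) powr e) (at x)"
    proof -
      have "x < x0" using x by auto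
      have "(F has_real_derivative (- (- (e+1) * (x0 - x) powr (e + 1 - 1))) / (e+1)) (at x)"
        unfolding F_def by (intro DERIV_cdivide DERIV_minus dpow_deriv \<open>x < x0\<close>)
      moreover have "(- (- (e+1) * (x0 - x) powr (e + 1 - 1))) / (e+1) = (x0 - x) powr e"
        using e by (simp add: field_simps)
      ultimately show ?thesis by simp
    qed
    then show "(F has_vector_derivative (x0 - x) powr e) (at x)"
      by (simp add: has_real_derivative_iff_has_vector_derivative)
  qed
  moreover have "F x0 - F t = (x0 - t) powr (e+1) / (e+1)"
    unfolding F_def by simp
  ultimately have "((\<lambda>x. (x0 - x) powr e) has_integral ((x0 - t) powr (e+1) / (e+1))) {t..x0}"
    by simp
  from nn_integral_has_integral_lebesgue'[OF _ this] show ?thesis by simp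
qed

lemma pow_int_from:
  fixes x0 s x a :: real
  assumes a: "a > 1" and sx: "s \<le> x" and xx: "x < x0"
  shows "(\<integral>\<^sup>+t. ennreal ((x0 - t) powr (-a)) * indicator {s..x} t \<partial>lborel)
         \<le> ennreal ((x0 - x) powr (1-a) / (a-1))"
proof -
  define F where "F t = (x0 - t) powr (1-a) / (a-1)" for t
  have "((\<lambda>t. (x0 - t) powr (-a)) has_integral (F x - F s)) {s..x}"
  proof (rule fundamental_theorem_of_calculus[OF sx])
    fix y assume y: "y \<in> {s..x}"
    then have "y < x0" using xx by auto
    have "(F has_real_derivative (- (1-a) * (x0 - y) powr (1 - a - 1)) / (a-1)) (at y)"
      unfolding F_def by (intro DERIV_cdivide dpow_deriv \<open>y < x0\<close>)
    moreover have "(- (1-a) * (x0 - y) powr (1 - a - 1)) / (a-1) = (x0 - y) powr (-a)"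
      using a by (simp add: field_simps)
    ultimately have "(F has_real_derivative (x0 - y) powr (-a)) (at y)" by simp
    then show "(F has_vector_derivative (x0 - y) powr (-a)) (at y within {s..x})"
      by (simp add: has_real_derivative_iff_has_vector_derivative has_vector_derivative_at_within)
  qed
  from nn_integral_has_integral_lebesgue'[OF _ this]
  have "(\<integral>\<^sup>+t. ennreal ((x0 - t) powr (-a)) * indicator {s..x} t \<partial>lborel) = ennreal (F x - F s)"
    by simp
  also have "\<dots> \<le> ennreal (F x)"
    using a by (intro ennreal_leI) (simp add: F_def)
  finally show ?thesis by (simp add: F_def)
qed

lemma half_pointwise:
  fixes p w w' :: "real \<Rightarrow> real" and s x0 q :: real and N :: "real set"
  assumes sx: "s < x0" and q: "q > 1"
    and ac: "\<And>b. s \<le> b \<Longrightarrow> b < x0 \<Longrightarrow> abs_continuous_on w s b"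
    and N: "negligible N"
    and der: "\<And>x. x \<in> {s..<x0} - N \<Longrightarrow> (w has_real_derivative w' x) (at x)"
    and wm: "(\<lambda>t. indicator {s..<x0} t * w' t) \<in> borel_measurable borel"
    and x: "x \<in> {s..<x0}"
  shows "ennreal ((w x)^2) \<le> ennreal (2 * (w s)^2) + 2 * (ennreal ((x0 - x) powr (1 - (q+1)/2) / ((q+1)/2 - 1)) *
     (\<integral>\<^sup>+t. ennreal ((x0 - t) powr ((q+1)/2) * (indicator {s..<x0} t * w' t)^2) * indicator {s..x} t \<partial>lborel))"
proof -
  define a where "a = (q+1)/2"
  have a1: "a > 1" using q by (simp add: a_def)
  define W where "W t = indicator {s..<x0} t * w' t" for t
  have Wm[measurable]: "W \<in> borel_measurable borel" using wm unfolding W_def[abs_def] .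
  have xs: "s \<le> x" "x < x0" using x by auto
  have sb: "set_borel_measurable borel {s..x} W"
    unfolding set_borel_measurable_def by measurable
  have derW: "(w has_real_derivative W t) (at t)" if "t \<in> {s..x} - N" for t
    using der[of t] that xs by (auto simp: W_def)
  have ftc: "ennreal \<bar>w x - w s\<bar> \<le> (\<integral>\<^sup>+t. ennreal \<bar>W t\<bar> * indicator {s..x} t \<partial>lborel)"
    by (rule ftc_ineq[OF ac[OF xs] xs(1) N derW sb])
  define F where "F t = ennreal ((x0 - t) powr (-a/2)) * indicator {s..x} t" for t
  define G where "G t = ennreal ((x0 - t) powr (a/2) * \<bar>W t\<bar>) * indicator {s..x} t" for t
  have Fm: "F \<in> borel_measurable lborel" unfolding F_def by measurable
  have Gm: "G \<in> borel_measurable lborel" unfolding G_def by measurable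
  have CS: "(\<integral>\<^sup>+t. F t * G t \<partial>lborel)\<^sup>2 \<le> (\<integral>\<^sup>+t. F t ^ 2 \<partial>lborel) * (\<integral>\<^sup>+t. G t ^ 2 \<partial>lborel)"
    by (rule Cauchy_Schwarz_nn_integral[OF Fm Gm])
  have FG: "F t * G t = ennreal \<bar>W t\<bar> * indicator {s..x} t" for t
  proof (cases "t \<in> {s..x}")
    case True
    then have pos: "x0 - t > 0" using xs by auto
    have "(x0 - t) powr (-a/2) * ((x0 - t) powr (a/2) * \<bar>W t\<bar>) = \<bar>W t\<bar>"
      using pos by (simp add: powr_minus field_simps)
    then show ?thesis using True pos by (simp add: F_def G_def ennreal_mult[symmetric])
  qed (simp add: F_def G_def)
  have F2: "F t ^ 2 = ennreal ((x0 - t) powr (-a)) * indicator {s..x} t" for t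
  proof (cases "t \<in> {s..x}")
    case True
    then have pos: "x0 - t > 0" using xs by auto
    have "((x0 - t) powr (-a/2))^2 = (x0 - t) powr (-a)"
      using pos by (simp add: power2_eq_square powr_add[symmetric])
    then show ?thesis using True by (simp add: F_def ennreal_power)
  qed (simp add: F_def)
  have G2: "G t ^ 2 = ennreal ((x0 - t) powr a * W t ^ 2) * indicator {s..x} t" for t
  proof (cases "t \<in> {s..x}")
    case True
    then have pos: "x0 - t > 0" using xs by auto
    have "((x0 - t) powr (a/2) * \<bar>W t\<bar>)^2 = (x0 - t) powr a * W t ^ 2"
      using pos by (simp add: power2_eq_square powr_add[symmetric] algebra_simps)
    then show ?thesis using True by (simp add: G_def ennreal_power)
  qed (simp add: G_def)
  define V where "V = (\<integral>\<^sup>+t. ennreal \<bar>W t\<bar> * indicator {s..x} t \<partial>lborel)"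
  define K where "K = (\<integral>\<^sup>+t. ennreal ((x0 - t) powr (-a)) * indicator {s..x} t \<partial>lborel)"
  define J where "J = (\<integral>\<^sup>+t. ennreal ((x0 - t) powr a * W t ^ 2) * indicator {s..x} t \<partial>lborel)"
  have VKJ: "V^2 \<le> K * J"
    using CS unfolding V_def K_def J_def FG F2 G2 .
  have Kb: "K \<le> ennreal ((x0 - x) powr (1-a) / (a-1))"
    unfolding K_def by (rule pow_int_from[OF a1 xs])
  have r1: "(w x)^2 \<le> 2 * (w s)^2 + 2 * \<bar>w x - w s\<bar>^2"
  proof -
    have "2 * (w s)^2 + 2 * \<bar>w x - w s\<bar>^2 - (w x)^2 = (w x - 2 * w s)^2"
      by (simp add: power2_eq_square algebra_simps)
    moreover have "0 \<le> (w x - 2 * w s)^2" by simp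
    ultimately show ?thesis by linarith
  qed
  have "ennreal ((w x)^2) \<le> ennreal (2 * (w s)^2 + 2 * \<bar>w x - w s\<bar>^2)"
    by (rule ennreal_leI[OF r1])
  also have "\<dots> = ennreal (2 * (w s)^2) + 2 * (ennreal \<bar>w x - w s\<bar>)^2"
  proof -
    have "ennreal (2 * (w s)^2 + 2 * \<bar>w x - w s\<bar>^2) = ennreal (2 * (w s)^2) + ennreal (2 * \<bar>w x - w s\<bar>^2)"
      by (rule ennreal_plus) auto
    moreover have "ennreal (2 * \<bar>w x - w s\<bar>^2) = 2 * (ennreal \<bar>w x - w s\<bar>)^2"
      by (subst ennreal_mult) (auto simp: ennreal_power)
    ultimately show ?thesis by simp
  qed
  also have "\<dots> \<le> ennreal (2 * (w s)^2) + 2 * V^2"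
    using ftc unfolding V_def by (intro add_left_mono mult_left_mono power_mono) auto
  also have "\<dots> \<le> ennreal (2 * (w s)^2) + 2 * (K * J)"
    using VKJ by (intro add_left_mono mult_left_mono) auto
  also have "\<dots> \<le> ennreal (2 * (w s)^2) + 2 * (ennreal ((x0 - x) powr (1-a) / (a-1)) * J)"
    using Kb by (intro add_left_mono mult_left_mono mult_right_mono) auto
  finally show ?thesis unfolding J_def W_def a_def .
qed

lemma half:
  fixes p w w' :: "real \<Rightarrow> real" and s x0 q :: real and N :: "real set"
  assumes sx: "s < x0" "x0 - s \<le> 1" and q: "q > 1"
    and pc: "continuous_on {s..<x0} p"
    and ppos: "\<And>x. x \<in> {s..<x0} \<Longrightarrow> p x > 0"
    and pmono: "antimono_on {s..<x0} (\<lambda>x. p x / \<bar>x - x0\<bar> powr q)"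
    and ac: "\<And>b. s \<le> b \<Longrightarrow> b < x0 \<Longrightarrow> abs_continuous_on w s b"
    and N: "negligible N"
    and der: "\<And>x. x \<in> {s..<x0} - N \<Longrightarrow> (w has_real_derivative w' x) (at x)"
    and wm: "(\<lambda>t. indicator {s..<x0} t * w' t) \<in> borel_measurable borel"
  shows "(\<integral>\<^sup>+x. ennreal (p x / (x - x0)^2 * (w x)^2) * indicator {s..<x0} x \<partial>lborel)
     \<le> ennreal (8/(q-1)^2) * (\<integral>\<^sup>+x. ennreal (p x * (w' x)^2) * indicator {s..<x0} x \<partial>lborel)
       + ennreal (2/(q-1) * ((w s)^2 * p s / (x0 - s) powr q))"
proof -
  define a where "a = (q+1)/2"
  define e where "e = q - 1 - a"
  have a1: "a > 1" and e1: "e > -1" and ea: "e + 1 = q - a" using q by (auto simp: a_def e_def)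
  define W where "W t = indicator {s..<x0} t * w' t" for t
  have Wm[measurable]: "W \<in> borel_measurable borel" using wm unfolding W_def[abs_def] .
  define P where "P t = indicator {s..<x0} t * p t" for t
  have Pm[measurable]: "P \<in> borel_measurable borel"
    using borel_measurable_continuous_on_indicator[OF _ pc] unfolding P_def[abs_def] by simp
  have P0: "P t \<ge> 0" for t using ppos[of t] by (auto simp: P_def indicator_def)
  define r0 where "r0 = p s / (x0 - s) powr q"
  define R where "R t = P t / (x0 - t) powr q * (x0 - t) powr a * (W t)^2 / (a - 1)" for t
  have R0: "R t \<ge> 0" for t using P0[of t] a1 by (simp add: R_def)
  define H where "H x t = (if s \<le> t \<and> t \<le> x then ennreal (R t * (x0 - x) powr e) else 0)" for x t
  have Hm: "(\<lambda>(x,t). H x t) \<in> borel_measurable (lborel \<Otimes>\<^sub>M lborel)"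
    unfolding H_def R_def by measurable
  have Hm2: "H x \<in> borel_measurable lborel" for x
    unfolding H_def R_def by measurable
  define J where "J x = (\<integral>\<^sup>+t. ennreal ((x0 - t) powr a * (W t)^2) * indicator {s..x} t \<partial>lborel)" for x
  define B1 where "B1 x = ennreal (2 * (w s)^2 * r0 * (x0 - x) powr (q - 2))" for x
  have pw: "ennreal (p x / (x - x0)^2 * (w x)^2) \<le> B1 x + 2 * (\<integral>\<^sup>+t. H x t \<partial>lborel)"
    if x: "x \<in> {s..<x0}" for x
  proof -
    have xs: "s \<le> x" "x < x0" using x by auto
    define D where "D = x0 - x"
    have D: "D > 0" using xs by (simp add: D_def)
    define rx where "rx = p x / D powr q"
    have rx0: "rx \<ge> 0" using ppos[OF x] D by (simp add: rx_def)
    have absx: "\<bar>y - x0\<bar> = x0 - y" if "y \<le> x0" for y using that by simp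
    have rmono: "p y / (x0 - y) powr q \<le> p t / (x0 - t) powr q"
      if "t \<in> {s..<x0}" "y \<in> {s..<x0}" "t \<le> y" for t y
      using monotone_onD[OF pmono that] that by (simp add: absx)
    have rxr0: "rx \<le> r0"
      using rmono[of s x] x sx by (simp add: rx_def r0_def D_def)
    have sq: "(x - x0)^2 = D^2" by (simp add: D_def power2_eq_square algebra_simps)
    have Dq: "D powr q = D powr (q - 2) * D^2"
    proof -
      have "D powr q = D powr ((q-2) + 2)" by simp
      also have "\<dots> = D powr (q-2) * D powr 2" by (rule powr_add)
      also have "D powr 2 = D^2" using D by (simp add: powr_numeral)
      finally show ?thesis .
    qed
    have eq1: "p x / (x - x0)^2 = rx * D powr (q-2)"
      using D unfolding sq rx_def Dq by (simp add: field_simps)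
    have eq2: "p x / (x - x0)^2 * (D powr (1 - a) / (a - 1)) = rx * D powr e / (a - 1)"
    proof -
      have "D powr (q-2) * D powr (1 - a) = D powr ((q-2) + (1 - a))"
        by (rule powr_add[symmetric])
      also have "(q-2) + (1 - a) = e" by (simp add: e_def)
      finally have "D powr (q-2) * D powr (1 - a) = D powr e" .
      then show ?thesis unfolding eq1 by (simp add: field_simps)
    qed
    have hp: "ennreal ((w x)^2) \<le> ennreal (2 * (w s)^2) + 2 * (ennreal (D powr (1 - a) / (a - 1)) * J x)"
      using half_pointwise[OF sx(1) q ac N der wm x] unfolding D_def J_def W_def a_def .
    have pxn: "p x / (x - x0)^2 \<ge> 0" using ppos[OF x] by simp
    have "ennreal (p x / (x - x0)^2 * (w x)^2) = ennreal (p x / (x - x0)^2) * ennreal ((w x)^2)"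
      using pxn by (rule ennreal_mult) simp
    also have "\<dots> \<le> ennreal (p x / (x - x0)^2) * (ennreal (2 * (w s)^2) + 2 * (ennreal (D powr (1 - a) / (a - 1)) * J x))"
      using hp by (rule mult_left_mono) simp
    also have "\<dots> = ennreal (p x / (x - x0)^2 * (2 * (w s)^2)) + 2 * (ennreal (p x / (x - x0)^2 * (D powr (1 - a) / (a - 1))) * J x)"
    proof -
      have v0: "D powr (1 - a) / (a - 1) \<ge> 0" using a1 by simp
      have u0: "2 * (w s)^2 \<ge> 0" by simp
      show ?thesis
        unfolding ennreal_mult[OF pxn u0] ennreal_mult[OF pxn v0]
        by (simp add: distrib_left ac_simps)
    qed
    also have "\<dots> = ennreal (rx * D powr (q-2) * (2 * (w s)^2)) + 2 * (ennreal (rx * D powr e / (a - 1)) * J x)"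
      by (subst eq2, subst eq1, rule refl)
    also have "\<dots> \<le> B1 x + 2 * (\<integral>\<^sup>+t. H x t \<partial>lborel)"
    proof (rule add_mono)
      show "ennreal (rx * D powr (q-2) * (2 * (w s)^2)) \<le> B1 x"
        unfolding B1_def D_def[symmetric] using rxr0
        by (intro ennreal_leI) (simp add: mult_right_mono algebra_simps)
      have "ennreal (rx * D powr e / (a - 1)) * J x
          = (\<integral>\<^sup>+t. ennreal (rx * D powr e / (a - 1)) * (ennreal ((x0 - t) powr a * (W t)^2) * indicator {s..x} t) \<partial>lborel)"
        unfolding J_def by (rule nn_integral_cmult[symmetric]) measurable
      also have "\<dots> \<le> (\<integral>\<^sup>+t. H x t \<partial>lborel)"
      proof (rule nn_integral_mono)
        fix t
        show "ennreal (rx * D powr e / (a - 1)) * (ennreal ((x0 - t) powr a * (W t)^2) * indicator {s..x} t) \<le> H x t"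
        proof (cases "s \<le> t \<and> t \<le> x")
          case True
          then have t: "t \<in> {s..<x0}" using xs by auto
          have "rx \<le> p t / (x0 - t) powr q" using rmono[OF t x] True by (simp add: rx_def D_def)
          moreover have "0 \<le> D powr e * ((x0 - t) powr a * (W t)^2)" by simp
          ultimately have "rx * (D powr e * ((x0 - t) powr a * (W t)^2)) / (a - 1)
              \<le> (p t / (x0 - t) powr q) * (D powr e * ((x0 - t) powr a * (W t)^2)) / (a - 1)"
            using a1 by (intro divide_right_mono mult_right_mono) auto
          moreover have "R t * (x0 - x) powr e = (p t / (x0 - t) powr q) * (D powr e * ((x0 - t) powr a * (W t)^2)) / (a - 1)"
            using t by (simp add: R_def P_def D_def mult_ac)
          moreover have "rx * D powr e / (a - 1) * ((x0 - t) powr a * (W t)^2) = rx * (D powr e * ((x0 - t) powr a * (W t)^2)) / (a - 1)"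
            by (simp add: mult_ac)
          ultimately have "rx * D powr e / (a - 1) * ((x0 - t) powr a * (W t)^2) \<le> R t * (x0 - x) powr e"
            by simp
          then show ?thesis using True rx0 a1 by (simp add: H_def ennreal_mult[symmetric] ennreal_leI)
        qed (simp add: H_def)
      qed
      finally show "2 * (ennreal (rx * D powr e / (a - 1)) * J x) \<le> 2 * (\<integral>\<^sup>+t. H x t \<partial>lborel)"
        by (rule mult_left_mono) simp
    qed
    finally show ?thesis .
  qed
  define I where "I x = (indicator {s..<x0} x :: ennreal)" for x
  define RHS where "RHS = (\<integral>\<^sup>+x. ennreal (p x * (w' x)^2) * indicator {s..<x0} x \<partial>lborel)"
  have step1: "(\<integral>\<^sup>+x. ennreal (p x / (x - x0)^2 * (w x)^2) * indicator {s..<x0} x \<partial>lborel)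
      \<le> (\<integral>\<^sup>+x. B1 x * I x + 2 * ((\<integral>\<^sup>+t. H x t \<partial>lborel) * I x) \<partial>lborel)"
  proof (rule nn_integral_mono)
    fix x
    show "ennreal (p x / (x - x0)^2 * (w x)^2) * indicator {s..<x0} x \<le> B1 x * I x + 2 * ((\<integral>\<^sup>+t. H x t \<partial>lborel) * I x)"
      using pw[of x] by (cases "x \<in> {s..<x0}") (auto simp: I_def)
  qed
  have m1: "(\<lambda>x. B1 x * I x) \<in> borel_measurable lborel" unfolding B1_def I_def by measurable
  have m2: "(\<lambda>x. (\<integral>\<^sup>+t. H x t \<partial>lborel) * I x) \<in> borel_measurable lborel"
    unfolding I_def using Hm by measurable
  have step2: "(\<integral>\<^sup>+x. B1 x * I x + 2 * ((\<integral>\<^sup>+t. H x t \<partial>lborel) * I x) \<partial>lborel)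
      = (\<integral>\<^sup>+x. B1 x * I x \<partial>lborel) + 2 * (\<integral>\<^sup>+x. (\<integral>\<^sup>+t. H x t \<partial>lborel) * I x \<partial>lborel)"
    using m1 m2 by (simp add: nn_integral_add nn_integral_cmult)
  have r00: "r0 \<ge> 0" using ppos[of s] sx by (simp add: r0_def)
  have first: "(\<integral>\<^sup>+x. B1 x * I x \<partial>lborel) \<le> ennreal (2 * (w s)^2 * r0 / (q-1))"
  proof -
    define c where "c = 2 * (w s)^2 * r0"
    have c0: "c \<ge> 0" using r00 by (simp add: c_def)
    have "(\<integral>\<^sup>+x. B1 x * I x \<partial>lborel) \<le> (\<integral>\<^sup>+x. ennreal c * (ennreal ((x0 - x) powr (q - 2)) * indicator {s..x0} x) \<partial>lborel)"
    proof (rule nn_integral_mono)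
      fix x show "B1 x * I x \<le> ennreal c * (ennreal ((x0 - x) powr (q - 2)) * indicator {s..x0} x)"
        by (cases "x \<in> {s..<x0}") (auto simp: B1_def I_def c_def[symmetric] ennreal_mult[OF c0] indicator_def)
    qed
    also have "\<dots> = ennreal c * (\<integral>\<^sup>+x. ennreal ((x0 - x) powr (q - 2)) * indicator {s..x0} x \<partial>lborel)"
      by (rule nn_integral_cmult) measurable
    also have "\<dots> = ennreal c * ennreal ((x0 - s) powr (q - 2 + 1) / (q - 2 + 1))"
      using pow_int_to[of "q-2" s x0] q sx by simp
    also have "\<dots> \<le> ennreal c * ennreal (1 / (q - 1))"
    proof (intro mult_left_mono ennreal_leI)
      have "(x0 - s) powr (q - 1) \<le> 1 powr (q - 1)"
        using sx q by (intro powr_mono2) auto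
      then show "(x0 - s) powr (q - 2 + 1) / (q - 2 + 1) \<le> 1 / (q - 1)"
        using q by (simp add: divide_right_mono)
    qed simp
    also have "\<dots> = ennreal (2 * (w s)^2 * r0 / (q-1))"
      using c0 q by (simp add: ennreal_mult[symmetric] c_def)
    finally show ?thesis .
  qed
  have key: "R t * ((x0 - t) powr (e+1) / (e+1)) = 4 / (q-1)^2 * (P t * (W t)^2)" if t: "t \<in> {s..<x0}" for t
  proof -
    define T where "T = x0 - t"
    have T: "T > 0" using t by (simp add: T_def)
    have "T powr a * T powr (e+1) = T powr (a + (e+1))" by (rule powr_add[symmetric])
    also have "a + (e+1) = q" using ea by simp
    finally have Tq: "T powr a * T powr (e+1) = T powr q" .
    have ae: "(a - 1) * (e + 1) = (q-1)^2 / 4" unfolding ea by (simp add: a_def power2_eq_square field_simps)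
    have "R t * ((x0 - t) powr (e+1) / (e+1)) = P t * (W t)^2 * (T powr a * T powr (e+1)) / T powr q / ((a-1) * (e+1))"
      by (simp add: R_def T_def field_simps)
    also have "\<dots> = P t * (W t)^2 / ((a-1) * (e+1))" unfolding Tq using T by simp
    also have "\<dots> = 4 / (q-1)^2 * (P t * (W t)^2)" unfolding ae by simp
    finally show ?thesis .
  qed
  have Hm3: "(\<lambda>(x, t). H x t * I x) \<in> borel_measurable (lborel \<Otimes>\<^sub>M lborel)"
    unfolding H_def R_def I_def by measurable
  have second: "(\<integral>\<^sup>+x. (\<integral>\<^sup>+t. H x t \<partial>lborel) * I x \<partial>lborel) \<le> ennreal (4/(q-1)^2) * RHS"
  proof -
    have "(\<integral>\<^sup>+x. (\<integral>\<^sup>+t. H x t \<partial>lborel) * I x \<partial>lborel) = (\<integral>\<^sup>+x. (\<integral>\<^sup>+t. H x t * I x \<partial>lborel) \<partial>lborel)"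
      by (intro nn_integral_cong nn_integral_multc[symmetric] Hm2)
    also have "\<dots> = (\<integral>\<^sup>+t. (\<integral>\<^sup>+x. H x t * I x \<partial>lborel) \<partial>lborel)"
      by (rule lborel_pair.Fubini'[OF Hm3, symmetric])
    also have "\<dots> \<le> (\<integral>\<^sup>+t. ennreal (R t * ((x0 - t) powr (e+1) / (e+1))) * indicator {s..<x0} t \<partial>lborel)"
    proof (rule nn_integral_mono)
      fix t
      show "(\<integral>\<^sup>+x. H x t * I x \<partial>lborel) \<le> ennreal (R t * ((x0 - t) powr (e+1) / (e+1))) * indicator {s..<x0} t"
      proof (cases "t \<in> {s..<x0}")
        case True
        have "(\<integral>\<^sup>+x. H x t * I x \<partial>lborel) \<le> (\<integral>\<^sup>+x. ennreal (R t) * (ennreal ((x0 - x) powr e) * indicator {t..x0} x) \<partial>lborel)"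
        proof (rule nn_integral_mono)
          fix x show "H x t * I x \<le> ennreal (R t) * (ennreal ((x0 - x) powr e) * indicator {t..x0} x)"
            using True by (auto simp: H_def I_def indicator_def ennreal_mult[OF R0])
        qed
        also have "\<dots> = ennreal (R t) * (\<integral>\<^sup>+x. ennreal ((x0 - x) powr e) * indicator {t..x0} x \<partial>lborel)"
          by (rule nn_integral_cmult) measurable
        also have "\<dots> = ennreal (R t) * ennreal ((x0 - t) powr (e+1) / (e+1))"
          using pow_int_to[OF e1, of t x0] True by simp
        also have "\<dots> = ennreal (R t * ((x0 - t) powr (e+1) / (e+1))) * indicator {s..<x0} t"
        proof -
          have nn: "0 \<le> (x0 - t) powr (e+1) / (e+1)" using e1 by simp
          show ?thesis using True unfolding ennreal_mult[OF R0 nn] by simp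
        qed
        finally show ?thesis .
      next
        case False
        have z: "(\<lambda>x. H x t * I x) = (\<lambda>x. 0)"
          using False by (auto simp: H_def I_def indicator_def fun_eq_iff)
        show ?thesis unfolding z by simp
      qed
    qed
    also have "\<dots> = (\<integral>\<^sup>+t. ennreal (4/(q-1)^2) * ennreal (P t * (W t)^2) \<partial>lborel)"
    proof (rule nn_integral_cong)
      fix t show "ennreal (R t * ((x0 - t) powr (e+1) / (e+1))) * indicator {s..<x0} t = ennreal (4/(q-1)^2) * ennreal (P t * (W t)^2)"
      proof (cases "t \<in> {s..<x0}")
        case True
        have nn1: "0 \<le> 4 / (q-1)^2" by simp
        have nn2: "0 \<le> P t * (W t)^2" using P0[of t] by simp
        show ?thesis using True unfolding key[OF True] ennreal_mult[OF nn1 nn2, symmetric] by simp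
      qed (simp add: P_def)
    qed
    also have "\<dots> = ennreal (4/(q-1)^2) * (\<integral>\<^sup>+t. ennreal (P t * (W t)^2) \<partial>lborel)"
      by (rule nn_integral_cmult) measurable
    also have "(\<integral>\<^sup>+t. ennreal (P t * (W t)^2) \<partial>lborel) = RHS"
      unfolding RHS_def by (intro nn_integral_cong) (auto simp: P_def W_def indicator_def)
    finally show ?thesis .
  qed
  have "(\<integral>\<^sup>+x. ennreal (p x / (x - x0)^2 * (w x)^2) * indicator {s..<x0} x \<partial>lborel)
      \<le> ennreal (2 * (w s)^2 * r0 / (q-1)) + 2 * (ennreal (4/(q-1)^2) * RHS)"
  proof -
    have "2 * (\<integral>\<^sup>+x. (\<integral>\<^sup>+t. H x t \<partial>lborel) * I x \<partial>lborel) \<le> 2 * (ennreal (4/(q-1)^2) * RHS)"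
      using second by (rule mult_left_mono) simp
    then have "(\<integral>\<^sup>+x. B1 x * I x \<partial>lborel) + 2 * (\<integral>\<^sup>+x. (\<integral>\<^sup>+t. H x t \<partial>lborel) * I x \<partial>lborel)
        \<le> ennreal (2 * (w s)^2 * r0 / (q-1)) + 2 * (ennreal (4/(q-1)^2) * RHS)"
      using first by (rule add_mono[rotated])
    then show ?thesis using step1 unfolding step2 by (rule order_trans[rotated])
  qed
  also have "\<dots> = ennreal (8/(q-1)^2) * RHS + ennreal (2/(q-1) * ((w s)^2 * p s / (x0 - s) powr q))"
  proof -
    have "2 * (ennreal (4/(q-1)^2) * RHS) = ennreal (8/(q-1)^2) * RHS"
    proof -
      have "ennreal (8/(q-1)^2) = ennreal (2 * (4/(q-1)^2))" by simp
      also have "\<dots> = ennreal 2 * ennreal (4/(q-1)^2)" by (rule ennreal_mult) auto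
      finally show ?thesis by (simp add: mult.assoc)
    qed
    moreover have "2 * (w s)^2 * r0 / (q-1) = 2/(q-1) * ((w s)^2 * p s / (x0 - s) powr q)"
      by (simp add: r0_def mult_ac)
    ultimately show ?thesis by (simp add: add.commute)
  qed
  finally show ?thesis unfolding RHS_def .
qed

lemma ac_reflect:
  assumes ac: "abs_continuous_on f a b"
  shows "abs_continuous_on (\<lambda>x. f (-x)) (-b) (-a)"
  unfolding abs_continuous_on_def
proof (intro allI impI)
  fix e :: real assume e: "e > 0"
  obtain d where d: "d > 0" and H: "\<And>(n::nat) (l::nat\<Rightarrow>real) r. (\<forall>i<n. a \<le> l i \<and> l i \<le> r i \<and> r i \<le> b) \<Longrightarrow>
        (\<forall>i<n. \<forall>j<n. i \<noteq> j \<longrightarrow> r i \<le> l j \<or> r j \<le> l i) \<Longrightarrow>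
        (\<Sum>i<n. r i - l i) < d \<Longrightarrow> (\<Sum>i<n. \<bar>f (r i) - f (l i)\<bar>) < e"
    by (rule acD[OF ac e]) blast
  show "\<exists>d>0. \<forall>(n::nat) (l::nat \<Rightarrow> real) r.
        (\<forall>i<n. - b \<le> l i \<and> l i \<le> r i \<and> r i \<le> - a) \<and>
        (\<forall>i<n. \<forall>j<n. i \<noteq> j \<longrightarrow> r i \<le> l j \<or> r j \<le> l i) \<and>
        (\<Sum>i<n. r i - l i) < d \<longrightarrow>
        (\<Sum>i<n. \<bar>f (- r i) - f (- l i)\<bar>) < e"
  proof (intro exI[of _ d] conjI allI impI d)
    fix n :: nat and l r :: "nat \<Rightarrow> real"
    assume A: "(\<forall>i<n. - b \<le> l i \<and> l i \<le> r i \<and> r i \<le> - a) \<and>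
        (\<forall>i<n. \<forall>j<n. i \<noteq> j \<longrightarrow> r i \<le> l j \<or> r j \<le> l i) \<and>
        (\<Sum>i<n. r i - l i) < d"
    have "(\<Sum>i<n. \<bar>f ((\<lambda>i. - l i) i) - f ((\<lambda>i. - r i) i)\<bar>) < e"
    proof (rule H)
      show "\<forall>i<n. a \<le> - r i \<and> - r i \<le> - l i \<and> - l i \<le> b" using A by force
      show "\<forall>i<n. \<forall>j<n. i \<noteq> j \<longrightarrow> - l i \<le> - r j \<or> - l j \<le> - r i" using A by force
      show "(\<Sum>i<n. - l i - - r i) < d" using A by (simp add: algebra_simps)
    qed
    then show "(\<Sum>i<n. \<bar>f (- r i) - f (- l i)\<bar>) < e"
      by (simp add: abs_minus_commute)
  qed
qed

lemma cont_left:
  assumes "\<And>b. s \<le> b \<Longrightarrow> b < x0 \<Longrightarrow> continuous_on {s..b} (w::real\<Rightarrow>real)"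
  shows "continuous_on {s..<x0} w"
  unfolding continuous_on_eq_continuous_within
proof
  fix x assume x: "x \<in> {s..<x0}"
  define b where "b = (x + x0) / 2"
  have b: "s \<le> b" "b < x0" "x < b" using x by (auto simp: b_def)
  have xin: "x \<in> {s..b}" using x b by auto
  have "continuous (at x within {s..b}) w"
    using continuous_on_eq_continuous_within[THEN iffD1, OF assms[OF b(1,2)]] xin by blast
  moreover have "at x within {s..<x0} = at x within {s..b}"
    by (rule at_within_nhd[of x "{..<b}"]) (use b in auto)
  ultimately show "continuous (at x within {s..<x0}) w" by simp
qed

lemma cont_right:
  assumes "\<And>a. x0 < a \<Longrightarrow> a \<le> t \<Longrightarrow> continuous_on {a..t} (w::real\<Rightarrow>real)"
  shows "continuous_on {x0<..t} w"
  unfolding continuous_on_eq_continuous_within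
proof
  fix x assume x: "x \<in> {x0<..t}"
  define a where "a = (x + x0) / 2"
  have a: "x0 < a" "a \<le> t" "a < x" using x by (auto simp: a_def)
  have xin: "x \<in> {a..t}" using x a by auto
  have "continuous (at x within {a..t}) w"
    using continuous_on_eq_continuous_within[THEN iffD1, OF assms[OF a(1,2)]] xin by blast
  moreover have "at x within {x0<..t} = at x within {a..t}"
    by (rule at_within_nhd[of x "{a<..}"]) (use a in auto)
  ultimately show "continuous (at x within {x0<..t}) w" by simp
qed

lemma nn_integral_reflect_lborel:
  fixes f :: "real \<Rightarrow> ennreal"
  assumes f: "f \<in> borel_measurable borel"
  shows "(\<integral>\<^sup>+x. f x \<partial>lborel) = (\<integral>\<^sup>+x. f (-x) \<partial>lborel)"
proof -
  have "(\<integral>\<^sup>+x. f x \<partial>lborel) = (\<integral>\<^sup>+x. f x \<partial>(distr lborel borel uminus))"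
    by (simp add: lborel_distr_uminus)
  also have "\<dots> = (\<integral>\<^sup>+x. f (-x) \<partial>lborel)"
    using f by (intro nn_integral_distr) auto
  finally show ?thesis .
qed

lemma null_lborel_negligible:
  assumes "N \<in> null_sets lborel"
  shows "negligible (N :: real set)"
  using assms unfolding negligible_iff_null_sets by (rule null_sets_completionI)

lemma negligible_reflect:
  assumes "negligible (N :: real set)"
  shows "negligible (uminus ` N)"
  by (rule negligible_differentiable_image_negligible[OF _ assms]) (auto intro: derivative_intros)

theorem proposition2p9:
  fixes p :: "real \<Rightarrow> real" and x0 q :: real
  assumes x0: "0 < x0" "x0 < 1"
    and pcont: "continuous_on {0..1} p"
    and ppos: "\<forall>x\<in>{0..1} - {x0}. p x > 0"
    and px0: "p x0 = 0"
    and q: "q > 1"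
    and pL: "antimono_on {0..<x0} (\<lambda>x. p x / \<bar>x - x0\<bar> powr q)"
    and pR: "mono_on {x0<..1} (\<lambda>x. p x / \<bar>x - x0\<bar> powr q)"
  shows "\<exists>C_HP > 0. \<forall>(w::real \<Rightarrow> real) (w'::real \<Rightarrow> real).
      loc_abs_continuous_punctured w x0 \<longrightarrow>
      set_borel_measurable lborel {0..1} w' \<longrightarrow>
      (AE x in lborel. x \<in> {0..1} \<longrightarrow> (w has_real_derivative w' x) (at x)) \<longrightarrow>
      (w has_real_derivative 0) (at_right 0) \<longrightarrow>
      (w has_real_derivative 0) (at_left 1) \<longrightarrow>
      (\<integral>\<^sup>+ x\<in>{0..1}. ennreal ((w' x)\<^sup>2) \<partial>lborel) < \<infinity> \<longrightarrow>
      (\<integral>\<^sup>+ x\<in>{0..1}. ennreal (p x / (x - x0)\<^sup>2 * (w x)\<^sup>2) \<partial>lborel)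
        \<le> ennreal C_HP * (\<integral>\<^sup>+ x\<in>{0..1}. ennreal (p x * (w' x)\<^sup>2) \<partial>lborel)
           + ennreal (2 * max ((1 - x0) powr (q - 1) / (q - 1)) (1 / (q - 1))
               * ((w 1)\<^sup>2 * p 1 / (1 - x0) powr q + (w 0)\<^sup>2 * p 0 / x0 powr q))"
proof -
  define C where "C = 8/(q-1)^2"
  have Cpos: "C > 0" using q by (simp add: C_def)
  show ?thesis
  proof (intro exI[of _ C] conjI Cpos allI impI)
    fix w w' :: "real \<Rightarrow> real"
    assume lac: "loc_abs_continuous_punctured w x0"
      and wmeas: "set_borel_measurable lborel {0..1} w'"
      and aeder: "AE x in lborel. x \<in> {0..1} \<longrightarrow> (w has_real_derivative w' x) (at x)"
    obtain N where Nnull: "N \<in> null_sets lborel"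
      and NP: "\<And>x. x \<in> space lborel - N \<Longrightarrow> x \<in> {0..1} \<longrightarrow> (w has_real_derivative w' x) (at x)"
      using AE_E3[OF aeder] by blast
    have negN: "negligible N" by (rule null_lborel_negligible[OF Nnull])
    have derN: "(w has_real_derivative w' x) (at x)" if "x \<in> {0..1} - N" for x
      using NP[of x] that by auto
    have acL: "abs_continuous_on w 0 b" if "0 \<le> b" "b < x0" for b
      using lac that unfolding loc_abs_continuous_punctured_def by blast
    have acR: "abs_continuous_on w a b" if "x0 < a" "b \<le> 1" for a b
      using lac that unfolding loc_abs_continuous_punctured_def by blast
    define g01 where "g01 x = indicator {0..1} x * w' x" for x
    have g01m[measurable]: "g01 \<in> borel_measurable borel"
      using wmeas unfolding set_borel_measurable_def g01_def[abs_def] by simp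
    have pc01: "\<And>S. S \<subseteq> {0..1} \<Longrightarrow> continuous_on S p" using pcont continuous_on_subset by blast
    have ppos': "p x > 0" if "x \<in> {0..1}" "x \<noteq> x0" for x using ppos that by blast
    (* left half *)
    have wmL: "(\<lambda>t. indicator {0..<x0} t * w' t) \<in> borel_measurable borel"
    proof -
      have "(\<lambda>t. indicator {0..<x0} t * g01 t) \<in> borel_measurable borel" by measurable
      moreover have "(\<lambda>t. indicator {0..<x0} t * g01 t) = (\<lambda>t. indicator {0..<x0} t * w' t)"
        using x0 by (auto simp: g01_def indicator_def fun_eq_iff)
      ultimately show ?thesis by simp
    qed
    have hL: "(\<integral>\<^sup>+x. ennreal (p x / (x - x0)^2 * (w x)^2) * indicator {0..<x0} x \<partial>lborel)
       \<le> ennreal (8/(q-1)^2) * (\<integral>\<^sup>+x. ennreal (p x * (w' x)^2) * indicator {0..<x0} x \<partial>lborel)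
         + ennreal (2/(q-1) * ((w 0)^2 * p 0 / (x0 - 0) powr q))"
    proof (rule half[of 0 x0 q p w N w'])
      show "0 < x0" "x0 - 0 \<le> 1" "1 < q" using x0 q by auto
      show "continuous_on {0..<x0} p" by (rule pc01) (use x0 in auto)
      show "\<And>x. x \<in> {0..<x0} \<Longrightarrow> 0 < p x" using ppos' x0 by auto
      show "antimono_on {0..<x0} (\<lambda>x. p x / \<bar>x - x0\<bar> powr q)" by (rule pL)
      show "\<And>b. 0 \<le> b \<Longrightarrow> b < x0 \<Longrightarrow> abs_continuous_on w 0 b" by (rule acL)
      show "negligible N" by (rule negN)
      show "\<And>x. x \<in> {0..<x0} - N \<Longrightarrow> (w has_real_derivative w' x) (at x)"
        using derN x0 by auto
      show "(\<lambda>t. indicator {0..<x0} t * w' t) \<in> borel_measurable borel" by (rule wmL)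
    qed
    (* right half *)
    define pr where "pr y = p (-y)" for y
    define wr where "wr y = w (-y)" for y
    define wr' where "wr' y = - w' (-y)" for y
    have wmR: "(\<lambda>t. indicator {-1..<-x0} t * wr' t) \<in> borel_measurable borel"
    proof -
      have "(\<lambda>t. - (indicator {-1..<-x0} t * g01 (-t))) \<in> borel_measurable borel" by measurable
      moreover have "(\<lambda>t. - (indicator {-1..<-x0} t * g01 (-t))) = (\<lambda>t. indicator {-1..<-x0} t * wr' t)"
        using x0 by (auto simp: g01_def wr'_def indicator_def fun_eq_iff)
      ultimately show ?thesis by simp
    qed
    have hR: "(\<integral>\<^sup>+y. ennreal (pr y / (y - -x0)^2 * (wr y)^2) * indicator {-1..<-x0} y \<partial>lborel)
       \<le> ennreal (8/(q-1)^2) * (\<integral>\<^sup>+y. ennreal (pr y * (wr' y)^2) * indicator {-1..<-x0} y \<partial>lborel)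
         + ennreal (2/(q-1) * ((wr (-1))^2 * pr (-1) / (-x0 - -1) powr q))"
    proof (rule half[of "-1" "-x0" q pr wr "uminus ` N" wr'])
      show "-1 < -x0" "-x0 - -1 \<le> 1" "1 < q" using x0 q by auto
      show "continuous_on {-1..<-x0} pr"
        unfolding pr_def
        by (rule continuous_on_compose2[OF pcont continuous_on_minus[OF continuous_on_id]]) (use x0 in auto)
      show "\<And>x. x \<in> {-1..<-x0} \<Longrightarrow> 0 < pr x" using ppos' x0 by (auto simp: pr_def)
      show "antimono_on {-1..<-x0} (\<lambda>x. pr x / \<bar>x - -x0\<bar> powr q)"
      proof (rule monotone_onI)
        fix y1 y2 assume y: "y1 \<in> {-1..<-x0}" "y2 \<in> {-1..<-x0}" "y1 \<le> y2"
        have "p (-y2) / \<bar>-y2 - x0\<bar> powr q \<le> p (-y1) / \<bar>-y1 - x0\<bar> powr q"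
          by (rule monotone_onD[OF pR]) (use y in auto)
        moreover have "\<bar>-y2 - x0\<bar> = \<bar>y2 - -x0\<bar>" "\<bar>-y1 - x0\<bar> = \<bar>y1 - -x0\<bar>" by auto
        ultimately show "pr y2 / \<bar>y2 - -x0\<bar> powr q \<le> pr y1 / \<bar>y1 - -x0\<bar> powr q"
          by (simp add: pr_def)
      qed
      show "\<And>b. -1 \<le> b \<Longrightarrow> b < -x0 \<Longrightarrow> abs_continuous_on wr (-1) b"
      proof -
        fix b :: real assume b: "-1 \<le> b" "b < -x0"
        have "abs_continuous_on w (-b) 1" using acR b by auto
        from ac_reflect[OF this] show "abs_continuous_on wr (-1) b" by (simp add: wr_def[abs_def])
      qed
      show "negligible (uminus ` N)" by (rule negligible_reflect[OF negN])
      show "\<And>x. x \<in> {-1..<-x0} - uminus ` N \<Longrightarrow> (wr has_real_derivative wr' x) (at x)"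
      proof -
        fix y assume y: "y \<in> {-1..<-x0} - uminus ` N"
        then have "-y \<notin> N" by (metis Diff_iff image_eqI minus_minus)
        then have "-y \<in> {0..1} - N" using y x0 by auto
        from derN[OF this] have "(w has_real_derivative w' (-y)) (at (-y))" .
        then show "(wr has_real_derivative wr' y) (at y)"
          unfolding wr_def[abs_def] wr'_def DERIV_mirror .
      qed
      show "(\<lambda>t. indicator {-1..<-x0} t * wr' t) \<in> borel_measurable borel" by (rule wmR)
    qed
    show "(\<integral>\<^sup>+ x\<in>{0..1}. ennreal (p x / (x - x0)\<^sup>2 * (w x)\<^sup>2) \<partial>lborel)
        \<le> ennreal C * (\<integral>\<^sup>+ x\<in>{0..1}. ennreal (p x * (w' x)\<^sup>2) \<partial>lborel)
           + ennreal (2 * max ((1 - x0) powr (q - 1) / (q - 1)) (1 / (q - 1))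
               * ((w 1)\<^sup>2 * p 1 / (1 - x0) powr q + (w 0)\<^sup>2 * p 0 / x0 powr q))"
    proof -
      have cwL: "continuous_on {0..<x0} w"
        by (rule cont_left) (rule ac_imp_cont[OF acL], auto)
      have cwR: "continuous_on {x0<..1} w"
        by (rule cont_right) (rule ac_imp_cont[OF acR], auto)
      define F where "F x = ennreal (p x / (x - x0)^2 * (w x)^2)" for x
      define G where "G x = ennreal (p x * (w' x)^2)" for x
      have mF: "(\<lambda>x. F x * indicator S x) \<in> borel_measurable borel"
        if S: "S \<in> sets borel" "S \<subseteq> {0..1}" "x0 \<notin> S" and cw: "continuous_on S w" for S
      proof -
        have c: "continuous_on S (\<lambda>x. p x / (x - x0)^2 * (w x)^2)"
          using pc01[OF S(2)] cw S(3) by (intro continuous_intros) auto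
        have "(\<lambda>x. indicator S x *\<^sub>R (p x / (x - x0)^2 * (w x)^2)) \<in> borel_measurable borel"
          by (rule borel_measurable_continuous_on_indicator[OF S(1) c])
        then have "(\<lambda>x. ennreal (indicator S x *\<^sub>R (p x / (x - x0)^2 * (w x)^2))) \<in> borel_measurable borel"
          by measurable
        moreover have "(\<lambda>x. ennreal (indicator S x *\<^sub>R (p x / (x - x0)^2 * (w x)^2))) = (\<lambda>x. F x * indicator S x)"
          by (auto simp: F_def indicator_def fun_eq_iff)
        ultimately show ?thesis by simp
      qed
      have mG: "(\<lambda>x. G x * indicator S x) \<in> borel_measurable borel"
        if S: "S \<in> sets borel" "S \<subseteq> {0..1}" for S
      proof -
        have "(\<lambda>x. indicator S x *\<^sub>R p x) \<in> borel_measurable borel"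
          by (rule borel_measurable_continuous_on_indicator[OF S(1) pc01[OF S(2)]])
        then have "(\<lambda>x. ennreal ((indicator S x *\<^sub>R p x) * (g01 x)^2)) \<in> borel_measurable borel"
          by measurable
        moreover have "(\<lambda>x. ennreal ((indicator S x *\<^sub>R p x) * (g01 x)^2)) = (\<lambda>x. G x * indicator S x)"
          using S(2) by (auto simp: G_def g01_def indicator_def fun_eq_iff)
        ultimately show ?thesis by simp
      qed
      have mFL: "(\<lambda>x. F x * indicator {0..<x0} x) \<in> borel_measurable lborel"
      proof -
        have "{0..<x0} \<subseteq> {0..(1::real)}" using x0 by auto
        from mF[OF _ this _ cwL] show ?thesis by simp
      qed
      have mFR: "(\<lambda>x. F x * indicator {x0<..1} x) \<in> borel_measurable borel"
      proof -
        have "{x0<..1} \<subseteq> {0..(1::real)}" using x0 by auto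
        from mF[OF _ this _ cwR] show ?thesis by simp
      qed
      have mGL: "(\<lambda>x. G x * indicator {0..<x0} x) \<in> borel_measurable lborel"
      proof -
        have "{0..<x0} \<subseteq> {0..(1::real)}" using x0 by auto
        from mG[OF _ this] show ?thesis by simp
      qed
      have mGR: "(\<lambda>x. G x * indicator {x0<..1} x) \<in> borel_measurable borel"
      proof -
        have "{x0<..1} \<subseteq> {0..(1::real)}" using x0 by auto
        from mG[OF _ this] show ?thesis by simp
      qed
      have LHS: "(\<integral>\<^sup>+ x\<in>{0..1}. ennreal (p x / (x - x0)\<^sup>2 * (w x)\<^sup>2) \<partial>lborel)
          = (\<integral>\<^sup>+x. F x * indicator {0..<x0} x \<partial>lborel) + (\<integral>\<^sup>+x. F x * indicator {x0<..1} x \<partial>lborel)"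
      proof -
        have "(\<integral>\<^sup>+ x\<in>{0..1}. ennreal (p x / (x - x0)\<^sup>2 * (w x)\<^sup>2) \<partial>lborel)
            = (\<integral>\<^sup>+x. F x * indicator {0..<x0} x + F x * indicator {x0<..1} x \<partial>lborel)"
        proof (rule nn_integral_cong)
          fix x
          show "ennreal (p x / (x - x0)\<^sup>2 * (w x)\<^sup>2) * indicator {0..1} x
              = F x * indicator {0..<x0} x + F x * indicator {x0<..1} x"
            using x0 px0 by (cases "x = x0") (auto simp: F_def indicator_def)
        qed
        also have "\<dots> = (\<integral>\<^sup>+x. F x * indicator {0..<x0} x \<partial>lborel) + (\<integral>\<^sup>+x. F x * indicator {x0<..1} x \<partial>lborel)"
          using mFL mFR by (intro nn_integral_add) auto
        finally show ?thesis .
      qed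
      have RF: "(\<integral>\<^sup>+x. F x * indicator {x0<..1} x \<partial>lborel)
          = (\<integral>\<^sup>+y. ennreal (pr y / (y - -x0)^2 * (wr y)^2) * indicator {-1..<-x0} y \<partial>lborel)"
      proof -
        have "(\<integral>\<^sup>+x. F x * indicator {x0<..1} x \<partial>lborel) = (\<integral>\<^sup>+y. F (-y) * indicator {x0<..1} (-y) \<partial>lborel)"
          by (rule nn_integral_reflect_lborel[OF mFR])
        also have "\<dots> = (\<integral>\<^sup>+y. ennreal (pr y / (y - -x0)^2 * (wr y)^2) * indicator {-1..<-x0} y \<partial>lborel)"
        proof (rule nn_integral_cong)
          fix y
          have "(-y - x0)^2 = (y - -x0)^2" by (simp add: power2_eq_square algebra_simps)
          moreover have "indicator {x0<..1} (-y) = (indicator {-1..<-x0} y :: ennreal)"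
            by (auto simp: indicator_def)
          ultimately show "F (-y) * indicator {x0<..1} (-y) = ennreal (pr y / (y - -x0)^2 * (wr y)^2) * indicator {-1..<-x0} y"
            by (simp add: F_def pr_def wr_def)
        qed
        finally show ?thesis .
      qed
      have RG: "(\<integral>\<^sup>+x. G x * indicator {x0<..1} x \<partial>lborel)
          = (\<integral>\<^sup>+y. ennreal (pr y * (wr' y)^2) * indicator {-1..<-x0} y \<partial>lborel)"
      proof -
        have "(\<integral>\<^sup>+x. G x * indicator {x0<..1} x \<partial>lborel) = (\<integral>\<^sup>+y. G (-y) * indicator {x0<..1} (-y) \<partial>lborel)"
          by (rule nn_integral_reflect_lborel[OF mGR])
        also have "\<dots> = (\<integral>\<^sup>+y. ennreal (pr y * (wr' y)^2) * indicator {-1..<-x0} y \<partial>lborel)"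
        proof (rule nn_integral_cong)
          fix y
          have "indicator {x0<..1} (-y) = (indicator {-1..<-x0} y :: ennreal)"
            by (auto simp: indicator_def)
          then show "G (-y) * indicator {x0<..1} (-y) = ennreal (pr y * (wr' y)^2) * indicator {-1..<-x0} y"
            by (simp add: G_def pr_def wr'_def)
        qed
        finally show ?thesis .
      qed
      have RHS: "(\<integral>\<^sup>+x. G x * indicator {0..<x0} x \<partial>lborel) + (\<integral>\<^sup>+x. G x * indicator {x0<..1} x \<partial>lborel)
          \<le> (\<integral>\<^sup>+ x\<in>{0..1}. ennreal (p x * (w' x)\<^sup>2) \<partial>lborel)"
      proof -
        have "(\<integral>\<^sup>+x. G x * indicator {0..<x0} x \<partial>lborel) + (\<integral>\<^sup>+x. G x * indicator {x0<..1} x \<partial>lborel)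
            = (\<integral>\<^sup>+x. G x * indicator {0..<x0} x + G x * indicator {x0<..1} x \<partial>lborel)"
          using mGL mGR by (intro nn_integral_add[symmetric]) auto
        also have "\<dots> \<le> (\<integral>\<^sup>+ x\<in>{0..1}. ennreal (p x * (w' x)\<^sup>2) \<partial>lborel)"
        proof (rule nn_integral_mono)
          fix x
          show "G x * indicator {0..<x0} x + G x * indicator {x0<..1} x \<le> ennreal (p x * (w' x)\<^sup>2) * indicator {0..1} x"
            using x0 by (auto simp: G_def indicator_def)
        qed
        finally show ?thesis .
      qed
      define A where "A = (w 1)\<^sup>2 * p 1 / (1 - x0) powr q"
      define B where "B = (w 0)\<^sup>2 * p 0 / x0 powr q"
      have A0: "A \<ge> 0" using ppos'[of 1] x0 by (simp add: A_def)
      have B0: "B \<ge> 0" using ppos'[of 0] x0 by (simp add: B_def)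
      have bL: "ennreal (2/(q-1) * ((w 0)^2 * p 0 / (x0 - 0) powr q)) = ennreal (2/(q-1) * B)"
        by (simp add: B_def)
      have bR: "ennreal (2/(q-1) * ((wr (-1))^2 * pr (-1) / (-x0 - -1) powr q)) = ennreal (2/(q-1) * A)"
        by (simp add: A_def wr_def pr_def)
      have bnd: "ennreal (2/(q-1) * B) + ennreal (2/(q-1) * A)
          \<le> ennreal (2 * max ((1 - x0) powr (q - 1) / (q - 1)) (1 / (q - 1)) * (A + B))"
      proof -
        have "ennreal (2/(q-1) * B) + ennreal (2/(q-1) * A) = ennreal (2 * (1/(q-1)) * (A + B))"
        proof -
          have "ennreal (2/(q-1) * B) + ennreal (2/(q-1) * A) = ennreal (2/(q-1) * B + 2/(q-1) * A)"
            using A0 B0 q by (intro ennreal_plus[symmetric]) auto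
          also have "2/(q-1) * B + 2/(q-1) * A = 2 * (1/(q-1)) * (A + B)" by (simp add: add_divide_distrib algebra_simps)
          finally show ?thesis .
        qed
        also have "\<dots> \<le> ennreal (2 * max ((1 - x0) powr (q - 1) / (q - 1)) (1 / (q - 1)) * (A + B))"
          using A0 B0 by (intro ennreal_leI mult_right_mono) auto
        finally show ?thesis .
      qed
      define RL where "RL = (\<integral>\<^sup>+x. G x * indicator {0..<x0} x \<partial>lborel)"
      define RR where "RR = (\<integral>\<^sup>+x. G x * indicator {x0<..1} x \<partial>lborel)"
      have hL': "(\<integral>\<^sup>+x. F x * indicator {0..<x0} x \<partial>lborel) \<le> ennreal C * RL + ennreal (2/(q-1) * B)"
        using hL unfolding bL by (simp add: F_def G_def RL_def C_def)
      have hR': "(\<integral>\<^sup>+x. F x * indicator {x0<..1} x \<partial>lborel) \<le> ennreal C * RR + ennreal (2/(q-1) * A)"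
        using hR unfolding bR RF RR_def RG by (simp add: C_def)
      have "(\<integral>\<^sup>+ x\<in>{0..1}. ennreal (p x / (x - x0)\<^sup>2 * (w x)\<^sup>2) \<partial>lborel)
          \<le> (ennreal C * RL + ennreal (2/(q-1) * B)) + (ennreal C * RR + ennreal (2/(q-1) * A))"
        unfolding LHS by (rule add_mono[OF hL' hR'])
      also have "\<dots> = ennreal C * (RL + RR) + (ennreal (2/(q-1) * B) + ennreal (2/(q-1) * A))"
        by (simp add: distrib_left ac_simps)
      also have "\<dots> \<le> ennreal C * (\<integral>\<^sup>+ x\<in>{0..1}. ennreal (p x * (w' x)\<^sup>2) \<partial>lborel)
          + ennreal (2 * max ((1 - x0) powr (q - 1) / (q - 1)) (1 / (q - 1)) * (A + B))"
        using RHS bnd unfolding RL_def RR_def by (intro add_mono mult_left_mono) auto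
      finally show ?thesis unfolding A_def B_def .
    qed
  qed
qed

end
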